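(* Let $L>0$, $U\in\mathbb{R}$, and let $\zeta,f:(-1,\infty)\to\mathbb{R}$ be smooth functions. Let $B$ be a smooth real function on $(\mathbb{R}/L\mathbb{Z})\times I$ ($I$ an open interval) with $1+B_s>0$, satisfying $$\big(B_{ttss}-B_{ssss}+\zeta(B_s)\,B_{ss}+\partial_s f(B_s)\big)(1+B_s)-B_{tt}+\partial_s\frac{(B_t-U)^2}{1+B_s}=0 .$$ Then $$I(t)=\int_0^L\big(B_t+B_{ss}B_{ts}\big)\,\mathrm{d}s$$ is independent of $t\in I$.
   Context: Subscripts denote partial derivatives in $s$ (coordinate along the tube) and $t$ (time). $B$ is the deviation of the back-to-labels map from a uniform flow with velocity $U$, and $a=B_s$ is the relative deviation of the cross-sectional area from equilibrium. The equation is the nondimensionalized equation of motion for a straight expandable tube conveying fluid with constant swirl; $\zeta$ combines wall stiffness and swirl, and $f$ is the derivative of the nonlinear part of the wall elastic energy. Periodic boundary conditions in $s$ are assumed. *)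

theory Defs
  imports "HOL-Analysis.Analysis"
begin

definition ds :: "(real \<times> real \<Rightarrow> real) \<Rightarrow> real \<times> real \<Rightarrow> real" where
  "ds F = (\<lambda>(s,t). deriv (\<lambda>\<sigma>. F (\<sigma>, t)) s)"

definition dt :: "(real \<times> real \<Rightarrow> real) \<Rightarrow> real \<times> real \<Rightarrow> real" where
  "dt F = (\<lambda>(s,t). deriv (\<lambda>\<tau>. F (s, \<tau>)) t)"

fun pd :: "bool list \<Rightarrow> (real \<times> real \<Rightarrow> real) \<Rightarrow> real \<times> real \<Rightarrow> real" where
  "pd [] F = F"
| "pd (b # bs) F = (if b then ds else dt) (pd bs F)"

definition smooth2_on :: "(real \<times> real) set \<Rightarrow> (real \<times> real \<Rightarrow> real) \<Rightarrow> bool" where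
  "smooth2_on S F \<longleftrightarrow> (\<forall>bs. pd bs F differentiable_on S)"

definition smooth1_on :: "real set \<Rightarrow> (real \<Rightarrow> real) \<Rightarrow> bool" where
  "smooth1_on S g \<longleftrightarrow> (\<forall>n. (deriv ^^ n) g differentiable_on S)"

end

theory Submission
  imports Defs
begin


lemma pd_append: "pd bs (pd cs F) = pd (bs @ cs) F"
  by (induction bs) auto

lemma smooth2_pd: "smooth2_on S F \<Longrightarrow> smooth2_on S (pd cs F)"
  by (simp add: smooth2_on_def pd_append)

lemma smooth2_ds: "smooth2_on S F \<Longrightarrow> smooth2_on S (ds F)"
  using smooth2_pd[of S F "[True]"] by simp

lemma smooth2_dt: "smooth2_on S F \<Longrightarrow> smooth2_on S (dt F)"
  using smooth2_pd[of S F "[False]"] by simp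

lemma smooth2_diffat:
  assumes "smooth2_on (UNIV \<times> I) F" "open I" "t \<in> I"
  shows "F differentiable at (s,t)"
proof -
  have "F differentiable_on (UNIV \<times> I)" using assms(1) pd.simps(1)[of F]
    unfolding smooth2_on_def by metis
  moreover have "open (UNIV \<times> I)" using assms(2) by (simp add: open_Times)
  ultimately show ?thesis using assms(3) differentiable_on_eq_differentiable_at by blast
qed

lemma smooth2_cont:
  assumes "smooth2_on (UNIV \<times> I) F" "open I"
  shows "continuous_on (UNIV \<times> I) F"
proof (rule continuous_at_imp_continuous_on, clarify)
  fix s t assume "t \<in> I"
  then show "isCont F (s,t)" using smooth2_diffat[OF assms] differentiable_imp_continuous_within by blast
qed

lemma smooth2_ds_deriv:
  assumes "smooth2_on (UNIV \<times> I) F" "open I" "t \<in> I"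
  shows "((\<lambda>\<sigma>. F (\<sigma>, t)) has_real_derivative ds F (s,t)) (at s)"
proof -
  have "(\<lambda>\<sigma>. (\<sigma>, t)) differentiable at s" by (auto intro!: derivative_intros)
  then have "(F \<circ> (\<lambda>\<sigma>. (\<sigma>, t))) differentiable at s"
    using differentiable_chain_at[of "\<lambda>\<sigma>. (\<sigma>, t)" s F] smooth2_diffat[OF assms] by auto
  then show ?thesis by (simp add: o_def ds_def DERIV_deriv_iff_real_differentiable)
qed

lemma smooth2_dt_deriv:
  assumes "smooth2_on (UNIV \<times> I) F" "open I" "t \<in> I"
  shows "((\<lambda>\<tau>. F (s, \<tau>)) has_real_derivative dt F (s,t)) (at t)"
proof -
  have "(\<lambda>\<tau>. (s, \<tau>)) differentiable at t" by (auto intro!: derivative_intros)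
  then have "(F \<circ> (\<lambda>\<tau>. (s, \<tau>))) differentiable at t"
    using differentiable_chain_at[of "\<lambda>\<tau>. (s, \<tau>)" t F] smooth2_diffat[OF assms] by auto
  then show ?thesis by (simp add: o_def dt_def DERIV_deriv_iff_real_differentiable)
qed




lemma swap_partials:
  assumes sm: "smooth2_on (UNIV \<times> I) F" and oI: "open I" and t0: "t0 \<in> I"
  shows "ds (dt F) (s0,t0) = dt (ds F) (s0,t0)"
proof -
  define a where "a = s0 - 1"
  define b where "b = s0 + 1"
  define H where "H = dt (ds F)"
  obtain r where r: "r > 0" "ball t0 r \<subseteq> I" using oI t0 openE by blast
  have cH: "continuous_on (UNIV \<times> I) H" unfolding H_def
    by (intro smooth2_cont smooth2_dt smooth2_ds sm oI)
  have cD: "continuous_on (UNIV \<times> I) (ds F)"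
    by (intro smooth2_cont smooth2_ds sm oI)
  have key: "dt F (\<sigma>,t0) = dt F (a,t0) + integral {a..\<sigma>} (\<lambda>x. H (x,t0))"
    if \<sigma>: "\<sigma> \<in> {a..b}" for \<sigma>
  proof -
    have eq: "F (\<sigma>,\<tau>) - F (a,\<tau>) = integral {a..\<sigma>} (\<lambda>x. ds F (x,\<tau>))" if "\<tau> \<in> I" for \<tau>
    proof -
      have "((\<lambda>x. ds F (x,\<tau>)) has_integral (F (\<sigma>,\<tau>) - F (a,\<tau>))) {a..\<sigma>}"
      proof (rule fundamental_theorem_of_calculus)
        show "a \<le> \<sigma>" using \<sigma> by simp
        fix x assume "x \<in> {a..\<sigma>}"
        have "((\<lambda>\<sigma>. F (\<sigma>, \<tau>)) has_real_derivative ds F (x,\<tau>)) (at x)"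
          using smooth2_ds_deriv[OF sm oI that] .
        then show "((\<lambda>\<sigma>. F (\<sigma>, \<tau>)) has_vector_derivative ds F (x,\<tau>)) (at x within {a..\<sigma>})"
          by (simp add: has_real_derivative_iff_has_vector_derivative has_vector_derivative_at_within)
      qed
      then show ?thesis by (simp add: integral_unique)
    qed
    have D1: "((\<lambda>\<tau>. integral (cbox a \<sigma>) (\<lambda>x. ds F (x,\<tau>))) has_field_derivative
                integral (cbox a \<sigma>) (\<lambda>x. H (x,t0))) (at t0 within ball t0 r)"
    proof (rule leibniz_rule_field_derivative[where f="\<lambda>\<tau> x. ds F (x,\<tau>)" and fx="\<lambda>\<tau> x. H (x,\<tau>)"])
      fix \<tau> x assume "\<tau> \<in> ball t0 r" "x \<in> cbox a \<sigma>"
      then have "\<tau> \<in> I" using r by auto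
      show "((\<lambda>\<tau>. ds F (x,\<tau>)) has_field_derivative H (x,\<tau>)) (at \<tau> within ball t0 r)"
        unfolding H_def using smooth2_dt_deriv[OF smooth2_ds[OF sm] oI \<open>\<tau> \<in> I\<close>]
        by (rule has_field_derivative_at_within)
    next
      fix \<tau> assume "\<tau> \<in> ball t0 r"
      then have "\<tau> \<in> I" using r by auto
      have "continuous_on {a..\<sigma>} (\<lambda>x. ds F (x,\<tau>))"
        by (rule continuous_on_compose2[OF cD, where f="\<lambda>x. (x,\<tau>)"])
           (use \<open>\<tau> \<in> I\<close> in \<open>auto intro!: continuous_intros\<close>)
      then show "(\<lambda>x. ds F (x,\<tau>)) integrable_on cbox a \<sigma>"
        by (simp add: integrable_continuous_real)
    next
      show "continuous_on (ball t0 r \<times> cbox a \<sigma>) (\<lambda>(\<tau>, x). H (x,\<tau>))"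
      proof -
        have "continuous_on (ball t0 r \<times> cbox a \<sigma>) (\<lambda>p. H (snd p, fst p))"
          by (rule continuous_on_compose2[OF cH, where f="\<lambda>p. (snd p, fst p)"])
             (use r in \<open>auto intro!: continuous_intros\<close>)
        then show ?thesis by (simp add: split_beta)
      qed
    qed (use r in auto)
    then have D1': "((\<lambda>\<tau>. integral {a..\<sigma>} (\<lambda>x. ds F (x,\<tau>))) has_field_derivative
                integral {a..\<sigma>} (\<lambda>x. H (x,t0))) (at t0)"
      using at_within_open[of t0 "ball t0 r"] r by simp
    have D2: "((\<lambda>\<tau>. F (\<sigma>,\<tau>) - F (a,\<tau>)) has_field_derivative dt F (\<sigma>,t0) - dt F (a,t0)) (at t0)"
      by (intro DERIV_diff smooth2_dt_deriv[OF sm oI t0])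
    have ev: "eventually (\<lambda>\<tau>. F (\<sigma>,\<tau>) - F (a,\<tau>) = integral {a..\<sigma>} (\<lambda>x. ds F (x,\<tau>))) (nhds t0)"
      using eventually_nhds_in_open[OF oI t0] by (rule eventually_mono) (rule eq)
    have "((\<lambda>\<tau>. F (\<sigma>,\<tau>) - F (a,\<tau>)) has_field_derivative integral {a..\<sigma>} (\<lambda>x. H (x,t0))) (at t0)"
      by (rule DERIV_cong_ev[OF refl ev refl, THEN iffD2, OF D1'])
    then have "dt F (\<sigma>,t0) - dt F (a,t0) = integral {a..\<sigma>} (\<lambda>x. H (x,t0))"
      using DERIV_unique[OF D2] by blast
    then show ?thesis by simp
  qed
  have cH1: "continuous_on {a..b} (\<lambda>x. H (x,t0))"
    by (rule continuous_on_compose2[OF cH, where f="\<lambda>x. (x,t0)"])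
       (use t0 in \<open>auto intro!: continuous_intros\<close>)
  have s0in: "s0 \<in> {a<..<b}" by (simp add: a_def b_def)
  have "((\<lambda>x. integral {a..x} (\<lambda>x. H (x,t0))) has_real_derivative H (s0,t0)) (at s0 within {a..b})"
    by (rule integral_has_real_derivative[OF cH1]) (use s0in in auto)
  then have E0: "((\<lambda>x. integral {a..x} (\<lambda>x. H (x,t0))) has_real_derivative H (s0,t0)) (at s0)"
    using at_within_interior[of s0 "{a..b}"] s0in by simp
  have E1: "((\<lambda>\<sigma>. dt F (a,t0) + integral {a..\<sigma>} (\<lambda>x. H (x,t0))) has_real_derivative H (s0,t0)) (at s0)"
    using DERIV_add[OF DERIV_const[of "dt F (a,t0)"] E0] by simp
  have ev: "eventually (\<lambda>\<sigma>. dt F (\<sigma>,t0) = dt F (a,t0) + integral {a..\<sigma>} (\<lambda>x. H (x,t0))) (nhds s0)"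
  proof -
    have "eventually (\<lambda>\<sigma>. \<sigma> \<in> {a<..<b}) (nhds s0)"
      by (rule eventually_nhds_in_open) (use s0in in auto)
    then show ?thesis
    proof (rule eventually_mono)
      fix \<sigma> :: real assume "\<sigma> \<in> {a<..<b}"
      then have "\<sigma> \<in> {a..b}" by simp
      then show "dt F (\<sigma>,t0) = dt F (a,t0) + integral {a..\<sigma>} (\<lambda>x. H (x,t0))" by (rule key)
    qed
  qed
  have E2: "((\<lambda>\<sigma>. dt F (\<sigma>,t0)) has_real_derivative H (s0,t0)) (at s0)"
    by (rule DERIV_cong_ev[OF refl ev refl, THEN iffD2, OF E1])
  have E3: "((\<lambda>\<sigma>. dt F (\<sigma>,t0)) has_real_derivative ds (dt F) (s0,t0)) (at s0)"
    by (rule smooth2_ds_deriv[OF smooth2_dt[OF sm] oI t0])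
  show ?thesis using DERIV_unique[OF E3 E2] by (simp add: H_def)
qed




lemma sm_cont1:
  assumes "smooth2_on (UNIV \<times> I) F" "open I" "\<tau> \<in> I"
  shows "continuous_on S (\<lambda>x. F (x,\<tau>))"
  by (rule continuous_on_compose2[OF smooth2_cont[OF assms(1,2)], where f="\<lambda>x. (x,\<tau>)"])
     (use assms(3) in \<open>auto intro!: continuous_intros\<close>)

lemma sm_cont2:
  assumes "smooth2_on (UNIV \<times> I) F" "open I"
  shows "continuous_on (I \<times> S) (\<lambda>p. F (snd p, fst p))"
  by (rule continuous_on_compose2[OF smooth2_cont[OF assms(1,2)], where f="\<lambda>p. (snd p, fst p)"])
     (auto intro!: continuous_intros)

lemma pd_periodic:
  assumes oI: "open I" and per: "\<And>s t. t \<in> I \<Longrightarrow> B (s + L, t) = B (s, t)"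
  shows "t \<in> I \<Longrightarrow> pd bs B (s + L, t) = pd bs B (s, t)"
proof (induction bs arbitrary: s t)
  case Nil then show ?case using per by simp
next
  case (Cons b bs)
  show ?case
  proof (cases b)
    case True
    have fe: "(\<lambda>\<sigma>. pd bs B (\<sigma> + L, t)) = (\<lambda>\<sigma>. pd bs B (\<sigma>, t))"
      using Cons by auto
    have "deriv (\<lambda>\<sigma>. pd bs B (\<sigma>, t)) (s + L) = deriv (\<lambda>\<sigma>. pd bs B (\<sigma> + L, t)) s"
      unfolding deriv_def using DERIV_shift[of "\<lambda>\<sigma>. pd bs B (\<sigma>, t)" _ s L] by simp
    also have "\<dots> = deriv (\<lambda>\<sigma>. pd bs B (\<sigma>, t)) s" by (simp only: fe)
    finally show ?thesis using True by (simp add: ds_def)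
  next
    case False
    have ev: "eventually (\<lambda>\<tau>. pd bs B (s + L, \<tau>) = pd bs B (s, \<tau>)) (nhds t)"
      using eventually_nhds_in_open[OF oI Cons.prems] by (rule eventually_mono) (rule Cons.IH)
    have "deriv (\<lambda>\<tau>. pd bs B (s + L, \<tau>)) t = deriv (\<lambda>\<tau>. pd bs B (s, \<tau>)) t"
      unfolding deriv_def using DERIV_cong_ev[OF refl ev refl] by simp
    then show ?thesis using False by (simp add: dt_def)
  qed
qed




lemma alg_identity:
  fixes btt bttss b4 b3 b2 b1 btss bts btts z fd q :: real
  assumes eqn: "(bttss - b4 + z*b2 + fd*b2)*(1+b1) - btt + q = 0"
  shows "btt + btss*bts + b2*btts = bttss*(1+b1) + (0+b2)*btts - (b4*(1+b1) + (0+b2)*b3)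
     + (b3*b2+b3*b2)/2 + (btss*bts + btss*bts)/2 + q + ((z + fd)*(1+b1))*b2"
proof -
  have "btt = (bttss - b4 + z*b2 + fd*b2)*(1+b1) + q" using eqn by linarith
  then show ?thesis by (simp add: algebra_simps)
qed

lemma main_integral_zero:
  fixes L U :: real and \<zeta> f :: "real \<Rightarrow> real"
    and B :: "real \<times> real \<Rightarrow> real" and I :: "real set"
  assumes L_pos: "L > 0"
    and zeta_smooth: "smooth1_on {-1<..} \<zeta>"
    and f_smooth: "smooth1_on {-1<..} f"
    and oI: "open I"
    and sm: "smooth2_on (UNIV \<times> I) B"
    and B_periodic: "\<And>s t. t \<in> I \<Longrightarrow> B (s + L, t) = B (s, t)"
    and B_area: "\<And>s t. t \<in> I \<Longrightarrow> 1 + ds B (s, t) > 0"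
    and B_eq: "\<And>s t. t \<in> I \<Longrightarrow>
        (ds (ds (dt (dt B))) (s, t) - ds (ds (ds (ds B))) (s, t)
          + \<zeta> (ds B (s, t)) * ds (ds B) (s, t)
          + ds (\<lambda>p. f (ds B p)) (s, t)) * (1 + ds B (s, t))
        - dt (dt B) (s, t)
        + ds (\<lambda>p. (dt B p - U)\<^sup>2 / (1 + ds B p)) (s, t) = 0"
    and t: "t \<in> I"
  shows "integral {0..L} (\<lambda>x. dt (dt B) (x,t) + dt (ds (ds B)) (x,t) * ds (dt B) (x,t)
             + ds (ds B) (x,t) * dt (ds (dt B)) (x,t)) = 0"
proof -
  have cont_b1: "continuous_on {0..L} (\<lambda>x. ds B (x,t))"
    by (rule sm_cont1[OF smooth2_ds[OF sm] oI t])
  obtain x0 where x0: "x0 \<in> {0..L}" "\<And>x. x \<in> {0..L} \<Longrightarrow> ds B (x0,t) \<le> ds B (x,t)"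
    using continuous_attains_inf[OF compact_Icc _ cont_b1] L_pos by fastforce
  obtain x1 where x1: "x1 \<in> {0..L}" "\<And>x. x \<in> {0..L} \<Longrightarrow> ds B (x,t) \<le> ds B (x1,t)"
    using continuous_attains_sup[OF compact_Icc _ cont_b1] L_pos by fastforce
  define m where "m = ds B (x0,t)"
  define M where "M = ds B (x1,t)"
  define c where "c = (m - 1) / 2"
  define d where "d = M + 1"
  have m1: "m > -1" using B_area[OF t] unfolding m_def by (smt (verit))
  have c1: "c > -1" "c < m" using m1 by (auto simp: c_def)
  have rng: "ds B (x,t) \<in> {c<..<d}" if "x \<in> {0..L}" for x
    using x0(2)[OF that] x1(2)[OF that] c1 by (auto simp: m_def M_def d_def)
  define g where "g = (\<lambda>y. (\<zeta> y + deriv f y) * (1 + y))"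
  have zc: "continuous_on {-1<..} \<zeta>"
    using zeta_smooth unfolding smooth1_on_def
    by (metis differentiable_imp_continuous_on funpow_0)
  have fdc: "continuous_on {-1<..} (deriv f)"
  proof -
    have "(deriv ^^ 1) f differentiable_on {-1<..}" using f_smooth unfolding smooth1_on_def by blast
    then show ?thesis by (simp add: differentiable_imp_continuous_on)
  qed
  have fdiff: "f differentiable_on {-1<..}"
    using f_smooth unfolding smooth1_on_def by (metis funpow_0)
  have fD: "DERIV f y :> deriv f y" if "y > -1" for y
  proof -
    have "f differentiable at y"
      using fdiff that differentiable_on_eq_differentiable_at[of "{-1<..}" f] by simp
    then show ?thesis by (simp add: DERIV_deriv_iff_real_differentiable)
  qed
  have gc: "continuous_on {c..d} g"
  proof -
    have sub: "{c..d} \<subseteq> {-1<..}" using c1 by auto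
    show ?thesis unfolding g_def
      by (intro continuous_intros continuous_on_subset[OF zc sub] continuous_on_subset[OF fdc sub])
  qed
  define G where "G = (\<lambda>y. integral {c..y} g)"
  have GD: "DERIV G y :> g y" if "y \<in> {c<..<d}" for y
  proof -
    have "(G has_real_derivative g y) (at y within {c..d})"
      unfolding G_def by (rule integral_has_real_derivative[OF gc]) (use that in auto)
    then show ?thesis using at_within_interior[of y "{c..d}"] that by simp
  qed
  have SM: "smooth2_on (UNIV \<times> I) (pd cs B)" for cs by (rule smooth2_pd[OF sm])
  have DS: "((\<lambda>\<sigma>. pd cs B (\<sigma>,t)) has_real_derivative ds (pd cs B) (s,t)) (at s)" for cs s
    by (rule smooth2_ds_deriv[OF SM oI t])
  have d_b1: "((\<lambda>\<sigma>. ds B (\<sigma>,t)) has_real_derivative ds (ds B) (s,t)) (at s)" for s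
    using DS[of "[True]"] by simp
  have d_b2: "((\<lambda>\<sigma>. ds (ds B) (\<sigma>,t)) has_real_derivative ds (ds (ds B)) (s,t)) (at s)" for s
    using DS[of "[True,True]"] by simp
  have d_b3: "((\<lambda>\<sigma>. ds (ds (ds B)) (\<sigma>,t)) has_real_derivative ds (ds (ds (ds B))) (s,t)) (at s)" for s
    using DS[of "[True,True,True]"] by simp
  have d_bt: "((\<lambda>\<sigma>. dt B (\<sigma>,t)) has_real_derivative ds (dt B) (s,t)) (at s)" for s
    using DS[of "[False]"] by simp
  have d_bts: "((\<lambda>\<sigma>. ds (dt B) (\<sigma>,t)) has_real_derivative ds (ds (dt B)) (s,t)) (at s)" for s
    using DS[of "[True,False]"] by simp
  have d_btts: "((\<lambda>\<sigma>. ds (dt (dt B)) (\<sigma>,t)) has_real_derivative ds (ds (dt (dt B))) (s,t)) (at s)" for s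
    using DS[of "[True,False,False]"] by simp
  define Qf where "Qf = (\<lambda>\<sigma>. (dt B (\<sigma>,t) - U)\<^sup>2 / (1 + ds B (\<sigma>,t)))"
  have dQ: "(Qf has_real_derivative ds (\<lambda>p. (dt B p - U)\<^sup>2 / (1 + ds B p)) (s,t)) (at s)" for s
  proof -
    have ne: "1 + ds B (s,t) \<noteq> 0" using B_area[OF t, of s] by simp
    have "\<exists>E. (Qf has_real_derivative E) (at s)"
      unfolding Qf_def by (rule exI) (rule derivative_eq_intros d_bt d_b1 refl | use ne in simp)+
    then obtain E where E: "(Qf has_real_derivative E) (at s)" by blast
    have "ds (\<lambda>p. (dt B p - U)\<^sup>2 / (1 + ds B p)) (s,t) = deriv Qf s"
      by (simp add: ds_def Qf_def)
    also have "\<dots> = E" by (rule DERIV_imp_deriv[OF E])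
    finally show ?thesis using E by simp
  qed
  have dF: "ds (\<lambda>p. f (ds B p)) (s,t) = deriv f (ds B (s,t)) * ds (ds B) (s,t)" for s
  proof -
    have "((\<lambda>\<sigma>. f (ds B (\<sigma>,t))) has_real_derivative deriv f (ds B (s,t)) * ds (ds B) (s,t)) (at s)"
      by (rule DERIV_chain2[OF fD d_b1]) (use B_area[OF t, of s] in simp)
    then show ?thesis by (simp add: ds_def DERIV_imp_deriv)
  qed
  have sw1: "dt (ds (ds B)) (s,t) = ds (ds (dt B)) (s,t)" for s
  proof -
    have e: "(\<lambda>\<sigma>. dt (ds B) (\<sigma>,t)) = (\<lambda>\<sigma>. ds (dt B) (\<sigma>,t))"
      using swap_partials[OF sm oI t] by simp
    have "dt (ds (ds B)) (s,t) = ds (dt (ds B)) (s,t)"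
      using swap_partials[OF smooth2_ds[OF sm] oI t] by simp
    also have "\<dots> = deriv (\<lambda>\<sigma>. dt (ds B) (\<sigma>,t)) s" by (simp add: ds_def)
    also have "\<dots> = deriv (\<lambda>\<sigma>. ds (dt B) (\<sigma>,t)) s" by (simp only: e)
    also have "\<dots> = ds (ds (dt B)) (s,t)" by (simp add: ds_def)
    finally show ?thesis .
  qed
  have sw2: "dt (ds (dt B)) (s,t) = ds (dt (dt B)) (s,t)" for s
    using swap_partials[OF smooth2_dt[OF sm] oI t] by simp
  define Psi where "Psi = (\<lambda>\<sigma>. ds (dt (dt B)) (\<sigma>,t) * (1 + ds B (\<sigma>,t))
     - ds (ds (ds B)) (\<sigma>,t) * (1 + ds B (\<sigma>,t))
     + ds (ds B) (\<sigma>,t) * ds (ds B) (\<sigma>,t) / 2 + ds (dt B) (\<sigma>,t) * ds (dt B) (\<sigma>,t) / 2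
     + Qf \<sigma> + G (ds B (\<sigma>,t)))"
  have dPsi: "(Psi has_real_derivative (dt (dt B) (x,t) + dt (ds (ds B)) (x,t) * ds (dt B) (x,t)
             + ds (ds B) (x,t) * dt (ds (dt B)) (x,t))) (at x)" if x: "x \<in> {0..L}" for x
  proof -
    have dG: "((\<lambda>\<sigma>. G (ds B (\<sigma>,t))) has_real_derivative g (ds B (x,t)) * ds (ds B) (x,t)) (at x)"
      by (rule DERIV_chain2[OF GD[OF rng[OF x]] d_b1])
    have D: "(Psi has_real_derivative
       (ds (ds (dt (dt B))) (x,t) * (1 + ds B (x,t)) + (0 + ds (ds B) (x,t)) * ds (dt (dt B)) (x,t)
       - (ds (ds (ds (ds B))) (x,t) * (1 + ds B (x,t)) + (0 + ds (ds B) (x,t)) * ds (ds (ds B)) (x,t))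
       + (ds (ds (ds B)) (x,t) * ds (ds B) (x,t) + ds (ds (ds B)) (x,t) * ds (ds B) (x,t)) / 2
       + (ds (ds (dt B)) (x,t) * ds (dt B) (x,t) + ds (ds (dt B)) (x,t) * ds (dt B) (x,t)) / 2
       + ds (\<lambda>p. (dt B p - U)\<^sup>2 / (1 + ds B p)) (x,t)
       + g (ds B (x,t)) * ds (ds B) (x,t))) (at x)"
      unfolding Psi_def
      by (intro DERIV_add DERIV_diff DERIV_mult DERIV_cdivide DERIV_const d_b1 d_b2 d_b3 d_bt d_bts d_btts dQ dG)
    note eqn = B_eq[OF t, of x]
    have "dt (dt B) (x,t) + dt (ds (ds B)) (x,t) * ds (dt B) (x,t)
             + ds (ds B) (x,t) * dt (ds (dt B)) (x,t) = 
       (ds (ds (dt (dt B))) (x,t) * (1 + ds B (x,t)) + (0 + ds (ds B) (x,t)) * ds (dt (dt B)) (x,t)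
       - (ds (ds (ds (ds B))) (x,t) * (1 + ds B (x,t)) + (0 + ds (ds B) (x,t)) * ds (ds (ds B)) (x,t))
       + (ds (ds (ds B)) (x,t) * ds (ds B) (x,t) + ds (ds (ds B)) (x,t) * ds (ds B) (x,t)) / 2
       + (ds (ds (dt B)) (x,t) * ds (dt B) (x,t) + ds (ds (dt B)) (x,t) * ds (dt B) (x,t)) / 2
       + ds (\<lambda>p. (dt B p - U)\<^sup>2 / (1 + ds B p)) (x,t)
       + g (ds B (x,t)) * ds (ds B) (x,t))"
      unfolding sw1 sw2 g_def by (rule alg_identity) (use eqn in \<open>simp only: dF\<close>)
    then show ?thesis using D by (simp only:)
  qed
  have PER: "pd cs B (L,t) = pd cs B (0,t)" for cs
    using pd_periodic[OF oI B_periodic t, of cs 0] by simp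
  have p1: "ds B (L,t) = ds B (0,t)" using PER[of "[True]"] by simp
  have p2: "ds (ds B) (L,t) = ds (ds B) (0,t)" using PER[of "[True,True]"] by simp
  have p3: "ds (ds (ds B)) (L,t) = ds (ds (ds B)) (0,t)" using PER[of "[True,True,True]"] by simp
  have p4: "dt B (L,t) = dt B (0,t)" using PER[of "[False]"] by simp
  have p5: "ds (dt B) (L,t) = ds (dt B) (0,t)" using PER[of "[True,False]"] by simp
  have p6: "ds (dt (dt B)) (L,t) = ds (dt (dt B)) (0,t)" using PER[of "[True,False,False]"] by simp
  have PsiL: "Psi L = Psi 0" unfolding Psi_def Qf_def by (simp only: p1 p2 p3 p4 p5 p6)
  have "((\<lambda>x. dt (dt B) (x,t) + dt (ds (ds B)) (x,t) * ds (dt B) (x,t)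
             + ds (ds B) (x,t) * dt (ds (dt B)) (x,t)) has_integral (Psi L - Psi 0)) {0..L}"
  proof (rule fundamental_theorem_of_calculus)
    show "0 \<le> L" using L_pos by simp
  next
    fix x assume "x \<in> {0..L}"
    then show "(Psi has_vector_derivative (dt (dt B) (x,t) + dt (ds (ds B)) (x,t) * ds (dt B) (x,t)
             + ds (ds B) (x,t) * dt (ds (dt B)) (x,t))) (at x within {0..L})"
      using dPsi has_real_derivative_iff_has_vector_derivative has_vector_derivative_at_within by blast
  qed
  then show ?thesis using PsiL by (simp add: integral_unique)
qed




theorem mainTheorem4:
  fixes L U :: real and \<zeta> f :: "real \<Rightarrow> real"
    and B :: "real \<times> real \<Rightarrow> real" and I :: "real set"
  assumes L_pos: "L > 0"
    and zeta_smooth: "smooth1_on {-1<..} \<zeta>"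
    and f_smooth: "smooth1_on {-1<..} f"
    and I_open: "open I" and I_interval: "is_interval I"
    and B_smooth: "smooth2_on (UNIV \<times> I) B"
    and B_periodic: "\<And>s t. t \<in> I \<Longrightarrow> B (s + L, t) = B (s, t)"
    and B_area: "\<And>s t. t \<in> I \<Longrightarrow> 1 + ds B (s, t) > 0"
    and B_eq: "\<And>s t. t \<in> I \<Longrightarrow>
        (ds (ds (dt (dt B))) (s, t) - ds (ds (ds (ds B))) (s, t)
          + \<zeta> (ds B (s, t)) * ds (ds B) (s, t)
          + ds (\<lambda>p. f (ds B p)) (s, t)) * (1 + ds B (s, t))
        - dt (dt B) (s, t)
        + ds (\<lambda>p. (dt B p - U)\<^sup>2 / (1 + ds B p)) (s, t) = 0"
  shows "\<exists>c. \<forall>t\<in>I. integral {0..L} (\<lambda>s. dt B (s, t) + ds (ds B) (s, t) * ds (dt B) (s, t)) = c"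
proof -
  note sm = B_smooth and oI = I_open
  have SM: "smooth2_on (UNIV \<times> I) (pd cs B)" for cs by (rule smooth2_pd[OF sm])
  have DT: "((\<lambda>\<tau>. pd cs B (s,\<tau>)) has_real_derivative dt (pd cs B) (s,\<tau>)) (at \<tau>)" if "\<tau> \<in> I" for cs s \<tau>
    by (rule smooth2_dt_deriv[OF SM oI that])
  have C1: "continuous_on S (\<lambda>x. pd cs B (x,\<tau>))" if "\<tau> \<in> I" for cs S \<tau>
    by (rule sm_cont1[OF SM oI that])
  have C2: "continuous_on (I \<times> S) (\<lambda>p. pd cs B (snd p, fst p))" for cs S
    by (rule sm_cont2[OF SM oI])
  have cvx: "convex I" using I_interval by (simp add: is_interval_convex)
  define h where "h = (\<lambda>\<tau> x. dt B (x,\<tau>) + ds (ds B) (x,\<tau>) * ds (dt B) (x,\<tau>))"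
  define h' where "h' = (\<lambda>\<tau> x. dt (dt B) (x,\<tau>) + dt (ds (ds B)) (x,\<tau>) * ds (dt B) (x,\<tau>)
             + ds (ds B) (x,\<tau>) * dt (ds (dt B)) (x,\<tau>))"
  have der: "((\<lambda>\<tau>. integral (cbox 0 L) (h \<tau>)) has_field_derivative integral (cbox 0 L) (h' t0)) (at t0 within I)"
    if t0: "t0 \<in> I" for t0
  proof (rule leibniz_rule_field_derivative[OF _ _ _ t0 cvx])
    fix \<tau> x assume \<tau>: "\<tau> \<in> I" and "x \<in> cbox 0 L"
    have a: "((\<lambda>\<tau>. dt B (x,\<tau>)) has_real_derivative dt (dt B) (x,\<tau>)) (at \<tau>)"
      using DT[OF \<tau>, of "[False]" x] by simp
    have b: "((\<lambda>\<tau>. ds (ds B) (x,\<tau>)) has_real_derivative dt (ds (ds B)) (x,\<tau>)) (at \<tau>)"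
      using DT[OF \<tau>, of "[True,True]" x] by simp
    have c: "((\<lambda>\<tau>. ds (dt B) (x,\<tau>)) has_real_derivative dt (ds (dt B)) (x,\<tau>)) (at \<tau>)"
      using DT[OF \<tau>, of "[True,False]" x] by simp
    have D: "((\<lambda>\<tau>. h \<tau> x) has_real_derivative dt (dt B) (x,\<tau>) + (dt (ds (ds B)) (x,\<tau>) * ds (dt B) (x,\<tau>)
              + dt (ds (dt B)) (x,\<tau>) * ds (ds B) (x,\<tau>))) (at \<tau>)"
      unfolding h_def by (intro DERIV_add DERIV_mult a b c)
    have e: "dt (dt B) (x,\<tau>) + (dt (ds (ds B)) (x,\<tau>) * ds (dt B) (x,\<tau>)
              + dt (ds (dt B)) (x,\<tau>) * ds (ds B) (x,\<tau>)) = h' \<tau> x"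
      unfolding h'_def by (simp add: algebra_simps)
    show "((\<lambda>\<tau>. h \<tau> x) has_real_derivative h' \<tau> x) (at \<tau> within I)"
      using D unfolding e by (rule has_field_derivative_at_within)
  next
    fix \<tau> assume \<tau>: "\<tau> \<in> I"
    have "continuous_on (cbox 0 L) (h \<tau>)"
      unfolding h_def
      using C1[OF \<tau>, where cs="[False]"] C1[OF \<tau>, where cs="[True,True]"] C1[OF \<tau>, where cs="[True,False]"]
      by (auto intro!: continuous_intros)
    then show "h \<tau> integrable_on cbox 0 L" by (simp add: integrable_continuous_real)
  next
    have "continuous_on (I \<times> cbox 0 L) (\<lambda>p. h' (fst p) (snd p))"
      unfolding h'_def
      using C2[where cs="[False,False]"] C2[where cs="[False,True,True]"] C2[where cs="[True,False]"]
        C2[where cs="[True,True]"] C2[where cs="[False,True,False]"]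
      by (auto intro!: continuous_intros)
    then show "continuous_on (I \<times> cbox 0 L) (\<lambda>(x, t). h' x t)" by (simp add: split_beta)
  qed
  have z: "integral (cbox 0 L) (h' t0) = 0" if "t0 \<in> I" for t0
    unfolding h'_def cbox_interval
    by (rule main_integral_zero[OF L_pos zeta_smooth f_smooth oI sm B_periodic B_area B_eq that])
  have "\<exists>c. \<forall>t\<in>I. integral (cbox 0 L) (h t) = c"
    by (rule has_field_derivative_zero_constant[OF cvx]) (use der z in auto)
  then show ?thesis unfolding h_def cbox_interval .
qed


end
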